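(* Let $\mathbb{K}$ be a non-Archimedean valued field, $n\ge1$, and $G$ a discrete group such that $H_{n-1}(G, \mathbb{Z})$ is a finitely generated abelian group. Then the comparison map $c^n : H^n_b(G, \mathbb{K}) \to H^n(G, \mathbb{K})$ is injective.
   Context: A non-Archimedean valued field is a field with an absolute value satisfying the ultrametric inequality. $H_{n-1}(G,\mathbb{Z})$ is ordinary group homology with trivial coefficients. $\mathbb{K}$ is a trivial $G$-module; $H^\bullet(G,\mathbb{K})$ is computed by the bar complex of all maps $G^n\to\mathbb{K}$ with $\delta^nf(g_1,\dots,g_{n+1})=f(g_2,\dots,g_{n+1})+\sum_{i=1}^n(-1)^if(g_1,\dots,g_ig_{i+1},\dots,g_{n+1})+(-1)^{n+1}f(g_1,\dots,g_n)$, and $H^\bullet_b(G,\mathbb{K})$ by its subcomplex of bounded maps; $c^n$ is induced by inclusion. *)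

theory Defs
  imports Complex_Main "HOL-Algebra.Group"
begin

definition nonarch_abs :: "('k::field \<Rightarrow> real) \<Rightarrow> bool" where
  "nonarch_abs v \<longleftrightarrow>
     (\<forall>x. v x \<ge> 0) \<and> (\<forall>x. v x = 0 \<longleftrightarrow> x = 0) \<and>
     (\<forall>x y. v (x * y) = v x * v y) \<and>
     (\<forall>x y. v (x + y) \<le> max (v x) (v y))"

definition tuples :: "('a, 'b) monoid_scheme \<Rightarrow> nat \<Rightarrow> 'a list set" where
  "tuples G n = {gs. length gs = n \<and> set gs \<subseteq> carrier G}"

text \<open>For 1 <= i < length gs: (g_1,...,g_i g_{i+1},...,g_m).\<close>
definition face_mul :: "('a, 'b) monoid_scheme \<Rightarrow> nat \<Rightarrow> 'a list \<Rightarrow> 'a list" where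
  "face_mul G i gs = take (i - 1) gs @ [gs ! (i - 1) \<otimes>\<^bsub>G\<^esub> gs ! i] @ drop (i + 1) gs"

definition cochains :: "('a, 'b) monoid_scheme \<Rightarrow> nat \<Rightarrow> ('a list \<Rightarrow> 'k::field) set" where
  "cochains G n = {f. \<forall>x. x \<notin> tuples G n \<longrightarrow> f x = 0}"

definition bcochains :: "('a, 'b) monoid_scheme \<Rightarrow> ('k::field \<Rightarrow> real) \<Rightarrow> nat
    \<Rightarrow> ('a list \<Rightarrow> 'k) set" where
  "bcochains G v n = {f \<in> cochains G n. \<exists>C. \<forall>x. v (f x) \<le> C}"

definition cobound :: "('a, 'b) monoid_scheme \<Rightarrow> nat \<Rightarrow> ('a list \<Rightarrow> 'k::field) \<Rightarrow> 'a list \<Rightarrow> 'k" where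
  "cobound G n f = (\<lambda>gs. if gs \<in> tuples G (n + 1) then
      f (tl gs) + (\<Sum>i\<in>{1..n}. (-1) ^ i * f (face_mul G i gs)) + (-1) ^ (n + 1) * f (butlast gs)
    else 0)"

definition cocycles :: "('a, 'b) monoid_scheme \<Rightarrow> nat \<Rightarrow> ('a list \<Rightarrow> 'k::field) set" where
  "cocycles G n = {f \<in> cochains G n. cobound G n f = (\<lambda>_. 0)}"

definition coboundaries :: "('a, 'b) monoid_scheme \<Rightarrow> nat \<Rightarrow> ('a list \<Rightarrow> 'k::field) set" where
  "coboundaries G n = (if n = 0 then {\<lambda>_. 0} else cobound G (n - 1) ` cochains G (n - 1))"

definition bcocycles :: "('a, 'b) monoid_scheme \<Rightarrow> ('k::field \<Rightarrow> real) \<Rightarrow> nat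
    \<Rightarrow> ('a list \<Rightarrow> 'k) set" where
  "bcocycles G v n = {f \<in> bcochains G v n. cobound G n f = (\<lambda>_. 0)}"

definition bcoboundaries :: "('a, 'b) monoid_scheme \<Rightarrow> ('k::field \<Rightarrow> real) \<Rightarrow> nat
    \<Rightarrow> ('a list \<Rightarrow> 'k) set" where
  "bcoboundaries G v n = (if n = 0 then {\<lambda>_. 0} else cobound G (n - 1) ` bcochains G v (n - 1))"

definition coh_class :: "('a, 'b) monoid_scheme \<Rightarrow> nat \<Rightarrow> ('a list \<Rightarrow> 'k::field) \<Rightarrow> ('a list \<Rightarrow> 'k) set" where
  "coh_class G n f = {f' \<in> cocycles G n. (\<lambda>x. f' x - f x) \<in> coboundaries G n}"

definition bcoh_class :: "('a, 'b) monoid_scheme \<Rightarrow> ('k::field \<Rightarrow> real) \<Rightarrow> nat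
    \<Rightarrow> ('a list \<Rightarrow> 'k) \<Rightarrow> ('a list \<Rightarrow> 'k) set" where
  "bcoh_class G v n f = {f' \<in> bcocycles G v n. (\<lambda>x. f' x - f x) \<in> bcoboundaries G v n}"

definition cohomology :: "('a, 'b) monoid_scheme \<Rightarrow> nat \<Rightarrow> ('a list \<Rightarrow> 'k::field) set set" where
  "cohomology G n = coh_class G n ` cocycles G n"

definition bounded_cohomology :: "('a, 'b) monoid_scheme \<Rightarrow> ('k::field \<Rightarrow> real) \<Rightarrow> nat
    \<Rightarrow> ('a list \<Rightarrow> 'k) set set" where
  "bounded_cohomology G v n = bcoh_class G v n ` bcocycles G v n"

text \<open>Comparison map c^n, induced by inclusion: sends [f]_b to [f].\<close>
definition comparison_map :: "('a, 'b) monoid_scheme \<Rightarrow> nat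
    \<Rightarrow> ('a list \<Rightarrow> 'k::field) set \<Rightarrow> ('a list \<Rightarrow> 'k) set" where
  "comparison_map G n X = (\<Union>f\<in>X. coh_class G n f)"

definition chains :: "('a, 'b) monoid_scheme \<Rightarrow> nat \<Rightarrow> ('a list \<Rightarrow> int) set" where
  "chains G k = {c. finite {x. c x \<noteq> 0} \<and> (\<forall>x. c x \<noteq> 0 \<longrightarrow> x \<in> tuples G k)}"

definition ind :: "'a list \<Rightarrow> 'a list \<Rightarrow> int" where
  "ind x = (\<lambda>y. if y = x then 1 else 0)"

definition bd_basis :: "('a, 'b) monoid_scheme \<Rightarrow> nat \<Rightarrow> 'a list \<Rightarrow> 'a list \<Rightarrow> int" where
  "bd_basis G k gs = (if k = 0 then (\<lambda>_. 0) else
     (\<lambda>y. ind (tl gs) y + (\<Sum>i\<in>{1..k-1}. (-1) ^ i * ind (face_mul G i gs) y)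
          + (-1) ^ k * ind (butlast gs) y))"

definition bd :: "('a, 'b) monoid_scheme \<Rightarrow> nat \<Rightarrow> ('a list \<Rightarrow> int) \<Rightarrow> 'a list \<Rightarrow> int" where
  "bd G k c = (\<lambda>y. \<Sum>x\<in>{x. c x \<noteq> 0}. c x * bd_basis G k x y)"

definition hcycles :: "('a, 'b) monoid_scheme \<Rightarrow> nat \<Rightarrow> ('a list \<Rightarrow> int) set" where
  "hcycles G k = {c \<in> chains G k. bd G k c = (\<lambda>_. 0)}"

definition hboundaries :: "('a, 'b) monoid_scheme \<Rightarrow> nat \<Rightarrow> ('a list \<Rightarrow> int) set" where
  "hboundaries G k = bd G (k + 1) ` chains G (k + 1)"

text \<open>H_k(G,Z) = Z_k / B_k is a finitely generated abelian group:
  finitely many cycles whose classes generate the quotient.\<close>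
definition homology_fg :: "('a, 'b) monoid_scheme \<Rightarrow> nat \<Rightarrow> bool" where
  "homology_fg G k \<longleftrightarrow> (\<exists>S. finite S \<and> S \<subseteq> hcycles G k \<and>
     (\<forall>z\<in>hcycles G k. \<exists>a :: ('a list \<Rightarrow> int) \<Rightarrow> int.
        (\<lambda>y. z y - (\<Sum>s\<in>S. a s * s y)) \<in> hboundaries G k))"

end

theory Submission
  imports Defs
begin


lemma int_subgroup_gen:
  fixes H :: "int set"
  assumes "0 \<in> H" and add: "\<And>a b. a \<in> H \<Longrightarrow> b \<in> H \<Longrightarrow> a + b \<in> H"
    and sc: "\<And>a k. a \<in> H \<Longrightarrow> k * a \<in> H"
  shows "\<exists>m\<in>H. \<forall>h\<in>H. m dvd h"
proof (cases "H \<subseteq> {0}")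
  case True
  then show ?thesis using assms(1) by auto
next
  case False
  then obtain h0 where h0: "h0 \<in> H" "h0 \<noteq> 0" by auto
  have "\<bar>h0\<bar> \<in> H" using sc[OF h0(1), of "sgn h0"] by (simp add: abs_sgn mult.commute)
  hence ex: "\<exists>n::nat. n > 0 \<and> int n \<in> H" using h0(2)
    by (intro exI[of _ "nat \<bar>h0\<bar>"]) auto
  define m where "m = (LEAST n::nat. n > 0 \<and> int n \<in> H)"
  have m: "m > 0" "int m \<in> H" using LeastI_ex[OF ex] unfolding m_def by auto
  have mmin: "\<And>n. n > 0 \<Longrightarrow> int n \<in> H \<Longrightarrow> m \<le> n" unfolding m_def
    by (rule Least_le) auto
  show ?thesis
  proof (intro bexI[of _ "int m"] ballI)
    fix h assume h: "h \<in> H"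
    have "h mod int m = h + (- (h div int m)) * int m" by (simp add: mod_div_mult_eq minus_div_mult_eq_mod [symmetric])
    hence r: "h mod int m \<in> H" using add[OF h sc[OF m(2), of "- (h div int m)"]] by simp
    have "h mod int m = 0"
    proof (rule ccontr)
      assume ne: "h mod int m \<noteq> 0"
      have pos: "h mod int m > 0" using ne m(1) by (simp add: order_le_neq_trans)
      have lt: "h mod int m < int m" using m(1) by simp
      have "m \<le> nat (h mod int m)" using mmin[of "nat (h mod int m)"] pos r by simp
      thus False using lt pos by (simp add: nat_le_iff)
    qed
    thus "int m dvd h" by (simp add: dvd_eq_mod_eq_0)
  qed (use m in auto)
qed

definition sec_inv :: "('y \<Rightarrow> int) set \<Rightarrow> (('y \<Rightarrow> int) \<Rightarrow> ('x \<Rightarrow> int))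
   \<Rightarrow> ('x + (('x \<Rightarrow> int) \<times> ('y \<Rightarrow> int))) set \<Rightarrow> bool" where
  "sec_inv Cs d S \<longleftrightarrow>
     (\<forall>b c. Inr (b,c) \<in> S \<longrightarrow> b \<in> d ` Cs \<and> {x. b x \<noteq> 0} \<subseteq> {x. Inl x \<in> S} \<and> c \<in> Cs \<and> d c = b) \<and>
     (\<forall>b. b \<in> d ` Cs \<and> {x. b x \<noteq> 0} \<subseteq> {x. Inl x \<in> S} \<longrightarrow> (\<exists>c. Inr (b,c) \<in> S)) \<and>
     (\<forall>b c c'. Inr (b,c) \<in> S \<longrightarrow> Inr (b,c') \<in> S \<longrightarrow> c = c') \<and>
     (\<forall>b c b' c'. Inr (b,c) \<in> S \<longrightarrow> Inr (b',c') \<in> S \<longrightarrow>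
         Inr ((\<lambda>x. b x + b' x), (\<lambda>y. c y + c' y)) \<in> S) \<and>
     (\<forall>b c k. Inr (b,c) \<in> S \<longrightarrow> Inr ((\<lambda>x. k * b x), (\<lambda>y. k * c y)) \<in> S)"

lemma sec_invD:
  assumes "sec_inv Cs d S"
  shows sec_inv1: "\<And>b c. Inr (b,c) \<in> S \<Longrightarrow> b \<in> d ` Cs"
    and sec_inv1b: "\<And>b c. Inr (b,c) \<in> S \<Longrightarrow> {x. b x \<noteq> 0} \<subseteq> {x. Inl x \<in> S}"
    and sec_inv1c: "\<And>b c. Inr (b,c) \<in> S \<Longrightarrow> c \<in> Cs"
    and sec_inv1d: "\<And>b c. Inr (b,c) \<in> S \<Longrightarrow> d c = b"
    and sec_inv2: "\<And>b. b \<in> d ` Cs \<Longrightarrow> {x. b x \<noteq> 0} \<subseteq> {x. Inl x \<in> S} \<Longrightarrow> \<exists>c. Inr (b,c) \<in> S"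
    and sec_inv3: "\<And>b c c'. Inr (b,c) \<in> S \<Longrightarrow> Inr (b,c') \<in> S \<Longrightarrow> c = c'"
    and sec_inv4: "\<And>b c b' c'. Inr (b,c) \<in> S \<Longrightarrow> Inr (b',c') \<in> S \<Longrightarrow>
         Inr ((\<lambda>x. b x + b' x), (\<lambda>y. c y + c' y)) \<in> S"
    and sec_inv5: "\<And>b c k. Inr (b,c) \<in> S \<Longrightarrow> Inr ((\<lambda>x. k * b x), (\<lambda>y. k * c y)) \<in> S"
  using assms unfolding sec_inv_def by blast+

lemma sec_invI:
  assumes "\<And>b c. Inr (b,c) \<in> S \<Longrightarrow> b \<in> d ` Cs \<and> {x. b x \<noteq> 0} \<subseteq> {x. Inl x \<in> S} \<and> c \<in> Cs \<and> d c = b"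
    and "\<And>b. b \<in> d ` Cs \<Longrightarrow> {x. b x \<noteq> 0} \<subseteq> {x. Inl x \<in> S} \<Longrightarrow> \<exists>c. Inr (b,c) \<in> S"
    and "\<And>b c c'. Inr (b,c) \<in> S \<Longrightarrow> Inr (b,c') \<in> S \<Longrightarrow> c = c'"
    and "\<And>b c b' c'. Inr (b,c) \<in> S \<Longrightarrow> Inr (b',c') \<in> S \<Longrightarrow>
         Inr ((\<lambda>x. b x + b' x), (\<lambda>y. c y + c' y)) \<in> S"
    and "\<And>b c k. Inr (b,c) \<in> S \<Longrightarrow> Inr ((\<lambda>x. k * b x), (\<lambda>y. k * c y)) \<in> S"
  shows "sec_inv Cs d S"
  using assms unfolding sec_inv_def by blast

lemma section_exists:
  fixes Cs :: "('y \<Rightarrow> int) set" and d :: "('y \<Rightarrow> int) \<Rightarrow> ('x \<Rightarrow> int)"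
  assumes C0: "(\<lambda>_. 0) \<in> Cs"
    and Cadd: "\<And>c c'. c \<in> Cs \<Longrightarrow> c' \<in> Cs \<Longrightarrow> (\<lambda>y. c y + c' y) \<in> Cs"
    and Csc: "\<And>c k. c \<in> Cs \<Longrightarrow> (\<lambda>y. k * c y) \<in> Cs"
    and dadd: "\<And>c c'. c \<in> Cs \<Longrightarrow> c' \<in> Cs \<Longrightarrow> d (\<lambda>y. c y + c' y) = (\<lambda>x. d c x + d c' x)"
    and dsc: "\<And>c k. c \<in> Cs \<Longrightarrow> d (\<lambda>y. k * c y) = (\<lambda>x. k * d c x)"
    and dfin: "\<And>c. c \<in> Cs \<Longrightarrow> finite {x. d c x \<noteq> 0}"
  shows "\<exists>s. (\<forall>b\<in>d ` Cs. s b \<in> Cs \<and> d (s b) = b) \<and>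
     (\<forall>b\<in>d ` Cs. \<forall>b'\<in>d ` Cs. s (\<lambda>x. b x + b' x) = (\<lambda>y. s b y + s b' y)) \<and>
     (\<forall>b\<in>d ` Cs. \<forall>k. s (\<lambda>x. k * b x) = (\<lambda>y. k * s b y))"
proof -
  let ?A = "{S. sec_inv Cs d S}"
  have d0: "d (\<lambda>_. 0) = (\<lambda>_. 0)" using dsc[OF C0, of 0] by simp
  have Badd: "(\<lambda>x. b x + b' x) \<in> d ` Cs" if bb: "b \<in> d ` Cs" "b' \<in> d ` Cs" for b b'
  proof -
    obtain c where c1: "b = d c" "c \<in> Cs" using bb(1) by blast
    obtain c' where c2: "b' = d c'" "c' \<in> Cs" using bb(2) by blast
    note cc = c1(2) c2(2) c1(1) c2(1)
    have "(\<lambda>x. b x + b' x) = d (\<lambda>y. c y + c' y)" using dadd[OF cc(1,2)] cc(3,4) by simp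
    thus ?thesis using Cadd[OF cc(1,2)] by (rule image_eqI)
  qed
  have Bsc: "(\<lambda>x. k * b x) \<in> d ` Cs" if bb: "b \<in> d ` Cs" for b k
  proof -
    obtain c where c1: "b = d c" "c \<in> Cs" using bb(1) by blast
    note cc = c1(2) c1(1)
    have "(\<lambda>x. k * b x) = d (\<lambda>y. k * c y)" using dsc[OF cc(1)] cc(2) by simp
    thus ?thesis using Csc[OF cc(1)] by (rule image_eqI)
  qed
  have "\<forall>C\<in>Zorn.chains ?A. \<exists>U\<in>?A. \<forall>X\<in>C. X \<subseteq> U"
  proof
    fix C assume C: "C \<in> Zorn.chains ?A"
    show "\<exists>U\<in>?A. \<forall>X\<in>C. X \<subseteq> U"
    proof (cases "C = {}")
      case True
      have z0: "(\<lambda>_. 0) \<in> d ` Cs" using imageI[OF C0, of d] unfolding d0 .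
      define Z :: "('x + (('x \<Rightarrow> int) \<times> ('y \<Rightarrow> int))) set"
        where "Z = {Inr ((\<lambda>_. 0), (\<lambda>_. 0))}"
      have "sec_inv Cs d Z"
      proof (rule sec_invI)
        fix b c assume "Inr (b, c) \<in> Z"
        hence "b = (\<lambda>_. 0)" "c = (\<lambda>_. 0)" unfolding Z_def by auto
        thus "b \<in> d ` Cs \<and> {x. b x \<noteq> 0} \<subseteq> {x. Inl x \<in> Z} \<and> c \<in> Cs \<and> d c = b"
          using z0 C0 d0 by simp
      next
        fix b assume "b \<in> d ` Cs" "{x. b x \<noteq> 0} \<subseteq> {x. Inl x \<in> Z}"
        hence "b = (\<lambda>_. 0)" unfolding Z_def by auto
        thus "\<exists>c. Inr (b, c) \<in> Z" unfolding Z_def by auto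
      qed (auto simp: Z_def)
      then show ?thesis using True by auto
    next
      case False
      have Cinv: "\<And>S. S \<in> C \<Longrightarrow> sec_inv Cs d S" using C by (auto simp: Zorn.chains_def)
      have ch: "\<And>S T. S \<in> C \<Longrightarrow> T \<in> C \<Longrightarrow> S \<subseteq> T \<or> T \<subseteq> S"
        using C by (auto simp: Zorn.chains_def chain_subset_def)
      have "sec_inv Cs d (\<Union>C)"
      proof (rule sec_invI)
        fix b c assume "Inr (b, c) \<in> \<Union>C"
        then obtain S where S: "S \<in> C" "Inr (b,c) \<in> S" by auto
        have "{x. b x \<noteq> 0} \<subseteq> {x. Inl x \<in> S}" by (rule sec_inv1b[OF Cinv[OF S(1)] S(2)])
        then show "b \<in> d ` Cs \<and> {x. b x \<noteq> 0} \<subseteq> {x. Inl x \<in> \<Union>C} \<and> c \<in> Cs \<and> d c = b"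
          using sec_inv1[OF Cinv[OF S(1)] S(2)] sec_inv1c[OF Cinv[OF S(1)] S(2)]
             sec_inv1d[OF Cinv[OF S(1)] S(2)] S(1) by auto
      next
        fix b assume b: "b \<in> d ` Cs" "{x. b x \<noteq> 0} \<subseteq> {x. Inl x \<in> \<Union> C}"
        have fin: "finite (Inl ` {x. b x \<noteq> 0} :: ('x + (('x \<Rightarrow> int) \<times> ('y \<Rightarrow> int))) set)"
          using b dfin by auto
        have sub: "Inl ` {x. b x \<noteq> 0} \<subseteq> \<Union>C" using b by auto
        have sch: "subset.chain UNIV C" using C by (auto simp: Zorn.chains_def chain_subset_alt_def)
        obtain S where S: "S \<in> C" "Inl ` {x. b x \<noteq> 0} \<subseteq> S"
          using finite_subset_Union_chain[OF fin sub False sch] by blast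
        then obtain c where "Inr (b,c) \<in> S" using sec_inv2[OF Cinv[OF S(1)] b(1)] by blast
        then show "\<exists>c. Inr (b,c) \<in> \<Union>C" using S by blast
      next
        fix b c c' assume a: "Inr (b, c) \<in> \<Union> C" "Inr (b, c') \<in> \<Union> C"
        then obtain S T where ST: "S \<in> C" "T \<in> C" "Inr (b,c) \<in> S" "Inr (b,c') \<in> T" by auto
        from ch[OF ST(1,2)] show "c = c'"
        proof
          assume "S \<subseteq> T" thus ?thesis using sec_inv3[OF Cinv[OF ST(2)]] ST by blast
        next
          assume "T \<subseteq> S" thus ?thesis using sec_inv3[OF Cinv[OF ST(1)]] ST by blast
        qed
      next
        fix b c b' c' assume a: "Inr (b, c) \<in> \<Union> C" "Inr (b', c') \<in> \<Union> C"
        then obtain S T where ST: "S \<in> C" "T \<in> C" "Inr (b,c) \<in> S" "Inr (b',c') \<in> T" by auto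
        from ch[OF ST(1,2)] show "Inr ((\<lambda>x. b x + b' x), (\<lambda>y. c y + c' y)) \<in> \<Union>C"
        proof
          assume "S \<subseteq> T" thus ?thesis using sec_inv4[OF Cinv[OF ST(2)]] ST by blast
        next
          assume "T \<subseteq> S" thus ?thesis using sec_inv4[OF Cinv[OF ST(1)]] ST by blast
        qed
      next
        fix b c k assume "Inr (b, c) \<in> \<Union>C"
        then obtain S where S: "S \<in> C" "Inr (b,c) \<in> S" by auto
        then show "Inr ((\<lambda>x. k * b x), (\<lambda>y. k * c y)) \<in> \<Union>C"
          using sec_inv5[OF Cinv[OF S(1)] S(2)] by blast
      qed
      then show ?thesis by auto
    qed
  qed
  from Zorn_Lemma2[OF this] obtain M where M: "sec_inv Cs d M"
    and Mmax: "\<And>X. sec_inv Cs d X \<Longrightarrow> M \<subseteq> X \<Longrightarrow> X = M" by auto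
  define sM where "sM b = (THE c. Inr (b,c) \<in> M)" for b
  have sM: "\<And>b c. Inr (b,c) \<in> M \<Longrightarrow> sM b = c"
    unfolding sM_def using sec_inv3[OF M] by (intro the_equality) blast+
  have full: "\<forall>x. Inl x \<in> M"
  proof (rule ccontr)
    assume "\<not> (\<forall>x. Inl x \<in> M)"
    then obtain x where x: "Inl x \<notin> M" by auto
    define Y where "Y = {x. Inl x \<in> M}"
    define D' where "D' = {b \<in> d ` Cs. {z. b z \<noteq> 0} \<subseteq> insert x Y}"
    have xY: "x \<notin> Y" using x Y_def by auto
    have D'add: "(\<lambda>z. b z + b' z) \<in> D'" if bb: "b \<in> D'" "b' \<in> D'" for b b'
    proof -
      have "{z. b z + b' z \<noteq> 0} \<subseteq> {z. b z \<noteq> 0} \<union> {z. b' z \<noteq> 0}" by auto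
      thus ?thesis using bb Badd unfolding D'_def by blast
    qed
    have D'sc: "(\<lambda>z. k * b z) \<in> D'" if "b \<in> D'" for b k
      using that Bsc unfolding D'_def by auto
    have D'0: "(\<lambda>_. 0) \<in> D'" unfolding D'_def using C0 d0 by (auto intro!: image_eqI[of _ d "\<lambda>_. 0"])
    have "\<exists>m\<in>(\<lambda>b. b x) ` D'. \<forall>h\<in>(\<lambda>b. b x) ` D'. m dvd h"
    proof (rule int_subgroup_gen)
      show "0 \<in> (\<lambda>b. b x) ` D'" using D'0 by force
      fix a b assume "a \<in> (\<lambda>b. b x) ` D'" "b \<in> (\<lambda>b. b x) ` D'"
      then obtain ba bb where "ba \<in> D'" "bb \<in> D'" "a = ba x" "b = bb x" by blast
      thus "a + b \<in> (\<lambda>b. b x) ` D'" using D'add[of ba bb] by force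
    next
      fix a k assume "a \<in> (\<lambda>b. b x) ` D'"
      then obtain ba where "ba \<in> D'" "a = ba x" by blast
      thus "k * a \<in> (\<lambda>b. b x) ` D'" using D'sc[of ba k] by force
    qed
    then obtain b0 where b0: "b0 \<in> D'" and b0dvd: "\<And>b. b \<in> D' \<Longrightarrow> b0 x dvd b x" by blast
    obtain c0 where c0: "c0 \<in> Cs" "d c0 = b0" using b0 unfolding D'_def by blast
    define q where "q b = b x div b0 x" for b :: "'x \<Rightarrow> int"
    have qb: "q b * b0 x = b x" if "b \<in> D'" for b
      unfolding q_def using b0dvd[OF that] by (rule dvd_div_mult_self)
    have qadd: "q (\<lambda>z. b z + b' z) = q b + q b'" if "b \<in> D'" "b' \<in> D'" for b b'
      unfolding q_def using b0dvd[OF that(1)] b0dvd[OF that(2)] by (simp add: div_add)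
    have qsc: "q (\<lambda>z. k * b z) = k * q b" if "b \<in> D'" for b k
      unfolding q_def using b0dvd[OF that] by (simp add: div_mult_swap)
    define r where "r b = (\<lambda>z. b z + (- q b) * b0 z)" for b :: "'x \<Rightarrow> int"
    have rD: "r b \<in> d ` Cs" "{z. r b z \<noteq> 0} \<subseteq> Y" if "b \<in> D'" for b
    proof -
      have "b \<in> d ` Cs" "b0 \<in> d ` Cs" using that b0 unfolding D'_def by auto
      thus "r b \<in> d ` Cs" unfolding r_def by (rule Badd[OF _ Bsc])
      show "{z. r b z \<noteq> 0} \<subseteq> Y"
      proof
        fix z assume z: "z \<in> {z. r b z \<noteq> 0}"
        have "z \<noteq> x" using z qb[OF that] unfolding r_def by auto
        moreover have "b z \<noteq> 0 \<or> b0 z \<noteq> 0" using z unfolding r_def by auto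
        ultimately show "z \<in> Y" using that b0 unfolding D'_def by auto
      qed
    qed
    have rM: "Inr (r b, sM (r b)) \<in> M" if bD: "b \<in> D'" for b
    proof -
      obtain c where "Inr (r b, c) \<in> M" using sec_inv2[OF M rD(1)[OF bD]] rD(2)[OF bD] Y_def by auto
      thus ?thesis using sM by simp
    qed
    have radd: "r (\<lambda>z. b z + b' z) = (\<lambda>z. r b z + r b' z)" if "b \<in> D'" "b' \<in> D'" for b b'
      unfolding r_def qadd[OF that] by (auto simp: algebra_simps)
    have rsc: "r (\<lambda>z. k * b z) = (\<lambda>z. k * r b z)" if "b \<in> D'" for b k
      unfolding r_def qsc[OF that] by (auto simp: algebra_simps)
    have sMadd: "sM (\<lambda>z. r b z + r b' z) = (\<lambda>y. sM (r b) y + sM (r b') y)" if "b \<in> D'" "b' \<in> D'" for b b'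
      using sM sec_inv4[OF M rM[OF that(1)] rM[OF that(2)]] by blast
    have sMsc: "sM (\<lambda>z. k * r b z) = (\<lambda>y. k * sM (r b) y)" if "b \<in> D'" for b k
      using sM sec_inv5[OF M rM[OF that]] by blast
    define s' where "s' b = (\<lambda>y. q b * c0 y + sM (r b) y)" for b
    have s'add: "s' (\<lambda>z. b z + b' z) = (\<lambda>y. s' b y + s' b' y)" if "b \<in> D'" "b' \<in> D'" for b b'
      unfolding s'_def qadd[OF that] radd[OF that] sMadd[OF that] by (auto simp: algebra_simps)
    have s'sc: "s' (\<lambda>z. k * b z) = (\<lambda>y. k * s' b y)" if "b \<in> D'" for b k
      unfolding s'_def qsc[OF that] rsc[OF that] sMsc[OF that] by (auto simp: algebra_simps)
    have s'C: "s' b \<in> Cs" if "b \<in> D'" for b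
      unfolding s'_def using Cadd[OF Csc[OF c0(1)] sec_inv1c[OF M rM[OF that]]] by simp
    have s'd: "d (s' b) = b" if "b \<in> D'" for b
    proof -
      have "d (s' b) = (\<lambda>z. q b * d c0 z + d (sM (r b)) z)"
        unfolding s'_def using dadd[OF Csc[OF c0(1)] sec_inv1c[OF M rM[OF that]]] dsc[OF c0(1)] by simp
      also have "\<dots> = (\<lambda>z. q b * b0 z + r b z)" using c0(2) sec_inv1d[OF M rM[OF that]] by simp
      also have "\<dots> = b" unfolding r_def by auto
      finally show ?thesis .
    qed
    have Mold: "b \<in> D' \<and> c = s' b" if "Inr (b,c) \<in> M" for b c
    proof -
      have bD: "b \<in> D'" using sec_inv1[OF M that] sec_inv1b[OF M that] unfolding D'_def Y_def by auto
      have "b x = 0" using sec_inv1b[OF M that] x by auto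
      hence q0: "q b = 0" unfolding q_def by simp
      have "r b = b" unfolding r_def q0 by simp
      hence "s' b = sM b" unfolding s'_def q0 by simp
      thus ?thesis using sM[OF that] bD by simp
    qed
    define M' where "M' = M \<union> {Inl x} \<union> (\<lambda>b. Inr (b, s' b)) ` D'"
    have M'Inr: "Inr (b,c) \<in> M' \<longleftrightarrow> b \<in> D' \<and> c = s' b" for b c
      unfolding M'_def using Mold by auto
    have M'Inl: "{z. Inl z \<in> M'} = insert x Y" unfolding M'_def Y_def by auto
    have "sec_inv Cs d M'"
    proof (rule sec_invI)
      fix b c assume "Inr (b,c) \<in> M'"
      hence bc: "b \<in> D'" "c = s' b" using M'Inr by auto
      show "b \<in> d ` Cs \<and> {x. b x \<noteq> 0} \<subseteq> {x. Inl x \<in> M'} \<and> c \<in> Cs \<and> d c = b"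
        using bc s'C s'd unfolding M'Inl unfolding D'_def by auto
    next
      fix b assume "b \<in> d ` Cs" "{x. b x \<noteq> 0} \<subseteq> {x. Inl x \<in> M'}"
      hence "b \<in> D'" unfolding M'Inl D'_def by auto
      thus "\<exists>c. Inr (b,c) \<in> M'" using M'Inr by auto
    next
      fix b c c' assume "Inr (b,c) \<in> M'" "Inr (b,c') \<in> M'"
      thus "c = c'" using M'Inr by auto
    next
      fix b c b' c' assume "Inr (b,c) \<in> M'" "Inr (b',c') \<in> M'"
      hence "b \<in> D'" "b' \<in> D'" "c = s' b" "c' = s' b'" using M'Inr by auto
      thus "Inr ((\<lambda>x. b x + b' x), (\<lambda>y. c y + c' y)) \<in> M'"
        using M'Inr D'add s'add by auto
    next
      fix b c k assume "Inr (b,c) \<in> M'"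
      hence "b \<in> D'" "c = s' b" using M'Inr by auto
      thus "Inr ((\<lambda>x. k * b x), (\<lambda>y. k * c y)) \<in> M'"
        using M'Inr D'sc s'sc by auto
    qed
    moreover have "M \<subseteq> M'" unfolding M'_def by auto
    ultimately have "M' = M" by (rule Mmax)
    thus False using x unfolding M'_def by auto
  qed
  have sMall: "Inr (b, sM b) \<in> M" if bD: "b \<in> d ` Cs" for b
  proof -
    obtain c where "Inr (b, c) \<in> M" using sec_inv2[OF M bD] full by auto
    thus ?thesis using sM by simp
  qed
  show ?thesis
  proof (intro exI[of _ sM] conjI ballI allI)
    fix b assume b: "b \<in> d ` Cs"
    show "sM b \<in> Cs" "d (sM b) = b" using sec_inv1c[OF M sMall[OF b]] sec_inv1d[OF M sMall[OF b]] by auto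
    fix k show "sM (\<lambda>x. k * b x) = (\<lambda>y. k * sM b y)"
      using sM sec_inv5[OF M sMall[OF b]] by blast
  next
    fix b b' assume b: "b \<in> d ` Cs" "b' \<in> d ` Cs"
    show "sM (\<lambda>x. b x + b' x) = (\<lambda>y. sM b y + sM b' y)"
      using sM sec_inv4[OF M sMall[OF b(1)] sMall[OF b(2)]] by blast
  qed
qed



definition face :: "('a, 'b) monoid_scheme \<Rightarrow> nat \<Rightarrow> nat \<Rightarrow> 'a list \<Rightarrow> 'a list" where
  "face G m i gs = (if i = 0 then tl gs else if i = m then butlast gs else face_mul G i gs)"

lemma face_length:
  assumes "length gs = m" "m \<ge> 1" "i \<le> m"
  shows "length (face G m i gs) = m - 1"
  using assms by (auto simp: face_def face_mul_def)

lemma face_nth: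
  assumes "length gs = m" "i \<le> m" "p < m - 1"
  shows "face G m i gs ! p = (if p + 1 < i then gs ! p else if p + 1 = i then gs ! p \<otimes>\<^bsub>G\<^esub> gs ! (p+1) else gs ! (p + 1))"
proof (cases "i = 0")
  case True
  then show ?thesis using assms by (simp add: face_def nth_tl)
next
  case False
  show ?thesis
  proof (cases "i = m")
    case True
    then show ?thesis using assms False by (auto simp: face_def nth_butlast)
  next
    case False2: False
    have i: "1 \<le> i" "i < m" using False False2 assms by auto
    have "face G m i gs = take (i - 1) gs @ [gs ! (i - 1) \<otimes>\<^bsub>G\<^esub> gs ! i] @ drop (i + 1) gs"
      using False False2 by (simp add: face_def face_mul_def)
    then show ?thesis using assms i
      by (auto simp: nth_append min_def)
  qed
qed

lemma face_tuples:
  assumes "group G" "gs \<in> tuples G m" "m \<ge> 1" "i \<le> m"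
  shows "face G m i gs \<in> tuples G (m - 1)"
proof -
  have len: "length (face G m i gs) = m - 1" using assms face_length unfolding tuples_def by auto
  have "face G m i gs ! p \<in> carrier G" if "p < m - 1" for p
  proof -
    have c: "gs ! q \<in> carrier G" if "q < m" for q using assms that unfolding tuples_def by auto
    show ?thesis using face_nth[of gs m i p G] assms that c
      by (auto simp: tuples_def intro!: monoid.m_closed[OF group.is_monoid[OF assms(1)]])
  qed
  thus ?thesis using len unfolding tuples_def by (auto simp: in_set_conv_nth)
qed

lemma face_face:
  assumes "group G" "gs \<in> tuples G m" "m \<ge> 2" "i < j" "j \<le> m"
  shows "face G (m - 1) i (face G m j gs) = face G (m - 1) (j - 1) (face G m i gs)"
proof (rule nth_equalityI)
  have len: "length gs = m" using assms unfolding tuples_def by auto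
  show "length (face G (m - 1) i (face G m j gs)) = length (face G (m - 1) (j - 1) (face G m i gs))"
    using assms len by (simp add: face_length)
  fix p assume "p < length (face G (m - 1) i (face G m j gs))"
  hence p: "p < m - 2" using assms len by (simp add: face_length)
  have c: "gs ! q \<in> carrier G" if "q < m" for q using assms that unfolding tuples_def by auto
  have l1: "length (face G m j gs) = m - 1" "length (face G m i gs) = m - 1"
    using assms len by (auto simp: face_length)
  have A: "face G (m - 1) i (face G m j gs) ! p =
     (if p + 1 < i then face G m j gs ! p else if p + 1 = i then face G m j gs ! p \<otimes>\<^bsub>G\<^esub> face G m j gs ! (p+1)
      else face G m j gs ! (p + 1))"
    using face_nth[where G=G, OF l1(1), of i p] assms p by auto
  have B: "face G (m - 1) (j - 1) (face G m i gs) ! p =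
     (if p + 1 < j - 1 then face G m i gs ! p else if p + 1 = j - 1 then face G m i gs ! p \<otimes>\<^bsub>G\<^esub> face G m i gs ! (p+1)
      else face G m i gs ! (p + 1))"
    using face_nth[where G=G, OF l1(2), of "j - 1" p] assms p by auto
  have Fj: "face G m j gs ! q = (if q + 1 < j then gs ! q else if q + 1 = j then gs ! q \<otimes>\<^bsub>G\<^esub> gs ! (q+1) else gs ! (q + 1))"
    if "q < m - 1" for q using face_nth[where G=G, OF len, of j q] assms that by auto
  have Fi: "face G m i gs ! q = (if q + 1 < i then gs ! q else if q + 1 = i then gs ! q \<otimes>\<^bsub>G\<^esub> gs ! (q+1) else gs ! (q + 1))"
    if "q < m - 1" for q using face_nth[where G=G, OF len, of i q] assms that by auto
  have assoc: "gs ! p \<otimes>\<^bsub>G\<^esub> gs ! (p+1) \<otimes>\<^bsub>G\<^esub> gs ! (p+2) = gs ! p \<otimes>\<^bsub>G\<^esub> (gs ! (p+1) \<otimes>\<^bsub>G\<^esub> gs ! (p+2))"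
    using c p by (intro monoid.m_assoc[OF group.is_monoid[OF assms(1)]]) auto
  show "face G (m - 1) i (face G m j gs) ! p = face G (m - 1) (j - 1) (face G m i gs) ! p"
    unfolding A B using p assms assoc by (auto simp: Fi Fj)
qed

lemma sum_split_ends:
  fixes f :: "nat \<Rightarrow> 'c::comm_monoid_add"
  assumes "m \<ge> 1"
  shows "(\<Sum>i\<in>{0..m}. f i) = f 0 + (\<Sum>i\<in>{1..m-1}. f i) + f m"
proof -
  have "{0..m} = insert 0 (insert m {1..m-1})" using assms by auto
  moreover have "0 \<notin> insert m {1..m-1}" "m \<notin> {1..m-1}" using assms by auto
  ultimately show ?thesis by (simp add: add_ac)
qed

lemma bd_basis_face:
  assumes "m \<ge> 1"
  shows "bd_basis G m gs = (\<lambda>y. \<Sum>i\<in>{0..m}. (-1) ^ i * ind (face G m i gs) y)"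
proof
  fix y
  have "(\<Sum>i\<in>{1..m-1}. (-1) ^ i * ind (face G m i gs) y) = (\<Sum>i\<in>{1..m-1}. (-1) ^ i * ind (face_mul G i gs) y)"
    by (rule sum.cong) (auto simp: face_def)
  thus "bd_basis G m gs y = (\<Sum>i\<in>{0..m}. (-1) ^ i * ind (face G m i gs) y)"
    using assms unfolding sum_split_ends[OF assms] bd_basis_def by (simp add: face_def)
qed

lemma cobound_face:
  assumes "gs \<in> tuples G (k + 1)"
  shows "cobound G k f gs = (\<Sum>i\<in>{0..k+1}. (-1) ^ i * f (face G (k+1) i gs))"
proof -
  have "(\<Sum>i\<in>{1..k}. (-1) ^ i * f (face G (k+1) i gs)) = (\<Sum>i\<in>{1..k}. (-1) ^ i * f (face_mul G i gs))"
    by (rule sum.cong) (auto simp: face_def)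
  moreover have "(\<Sum>i\<in>{0..k+1}. (-1) ^ i * f (face G (k+1) i gs)) =
     (-1) ^ 0 * f (face G (k+1) 0 gs) + (\<Sum>i\<in>{1..k+1-1}. (-1) ^ i * f (face G (k+1) i gs))
       + (-1) ^ (k+1) * f (face G (k+1) (k+1) gs)"
    by (rule sum_split_ends) simp
  ultimately show ?thesis using assms unfolding cobound_def by (simp add: face_def)
qed

lemma bd_basis_supp:
  "{y. bd_basis G m gs y \<noteq> 0} \<subseteq> (\<lambda>i. face G m i gs) ` {0..m}"
proof (cases "m = 0")
  case True thus ?thesis by (simp add: bd_basis_def)
next
  case False
  show ?thesis
  proof
    fix y assume "y \<in> {y. bd_basis G m gs y \<noteq> 0}"
    hence "(\<Sum>i\<in>{0..m}. (-1) ^ i * ind (face G m i gs) y) \<noteq> (0::int)"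
      using bd_basis_face[of m G gs] False by simp
    then obtain i where "i \<in> {0..m}" "ind (face G m i gs) y \<noteq> 0"
      by (metis (mono_tags, lifting) mult_zero_right sum.neutral)
    thus "y \<in> (\<lambda>i. face G m i gs) ` {0..m}" by (auto simp: ind_def split: if_splits)
  qed
qed

lemma finite_bd_basis_supp: "finite {y. bd_basis G m gs y \<noteq> 0}"
  by (rule finite_subset[OF bd_basis_supp]) auto

lemma bd_basis_tuples:
  assumes "group G" "gs \<in> tuples G m" "bd_basis G m gs y \<noteq> 0"
  shows "y \<in> tuples G (m - 1)"
proof -
  have m: "m \<noteq> 0" using assms(3) by (cases "m = 0") (auto simp: bd_basis_def)
  obtain i where "i \<in> {0..m}" "y = face G m i gs" using bd_basis_supp assms(3) by blast
  thus ?thesis using face_tuples[OF assms(1,2)] m by auto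
qed

lemma bd_superset:
  assumes "finite T" "{x. c x \<noteq> 0} \<subseteq> T"
  shows "bd G k c = (\<lambda>y. \<Sum>x\<in>T. c x * bd_basis G k x y)"
proof
  fix y show "bd G k c y = (\<Sum>x\<in>T. c x * bd_basis G k x y)"
    unfolding bd_def by (rule sum.mono_neutral_left) (use assms in auto)
qed

definition pair :: "('a list \<Rightarrow> 'k::field) \<Rightarrow> ('a list \<Rightarrow> int) \<Rightarrow> 'k" where
  "pair g c = (\<Sum>x\<in>{x. c x \<noteq> 0}. of_int (c x) * g x)"

lemma pair_superset:
  assumes "finite T" "{x. c x \<noteq> 0} \<subseteq> T"
  shows "pair g c = (\<Sum>x\<in>T. of_int (c x) * g x)"
  unfolding pair_def by (rule sum.mono_neutral_left) (use assms in auto)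

lemma pair_lin:
  assumes "finite I" "\<And>i. i \<in> I \<Longrightarrow> finite {x. c i x \<noteq> 0}"
  shows "pair g (\<lambda>y. \<Sum>i\<in>I. a i * c i y) = (\<Sum>i\<in>I. of_int (a i) * pair g (c i))"
proof -
  define T where "T = (\<Union>i\<in>I. {x. c i x \<noteq> 0})"
  have T: "finite T" unfolding T_def using assms by auto
  have sub: "{x. (\<Sum>i\<in>I. a i * c i x) \<noteq> 0} \<subseteq> T" unfolding T_def
    by (auto elim!: sum.not_neutral_contains_not_neutral)
  have "pair g (\<lambda>y. \<Sum>i\<in>I. a i * c i y) = (\<Sum>x\<in>T. of_int (\<Sum>i\<in>I. a i * c i x) * g x)"
    by (rule pair_superset[OF T sub])
  also have "\<dots> = (\<Sum>i\<in>I. of_int (a i) * (\<Sum>x\<in>T. of_int (c i x) * g x))"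
    by (simp add: sum_distrib_left sum_distrib_right mult.assoc sum.swap[of _ T])
  also have "\<dots> = (\<Sum>i\<in>I. of_int (a i) * pair g (c i))"
    by (rule sum.cong[OF refl], subst pair_superset[OF T]) (auto simp: T_def)
  finally show ?thesis .
qed

lemma bd_lin:
  assumes "finite I" "\<And>i. i \<in> I \<Longrightarrow> finite {x. c i x \<noteq> 0}"
  shows "bd G k (\<lambda>y. \<Sum>i\<in>I. a i * c i y) = (\<lambda>y. \<Sum>i\<in>I. a i * bd G k (c i) y)"
proof
  fix y
  define T where "T = (\<Union>i\<in>I. {x. c i x \<noteq> 0})"
  have T: "finite T" unfolding T_def using assms by auto
  have sub: "{x. (\<Sum>i\<in>I. a i * c i x) \<noteq> 0} \<subseteq> T" unfolding T_def
    by (auto elim!: sum.not_neutral_contains_not_neutral)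
  have "bd G k (\<lambda>y. \<Sum>i\<in>I. a i * c i y) y = (\<Sum>x\<in>T. (\<Sum>i\<in>I. a i * c i x) * bd_basis G k x y)"
    by (subst bd_superset[OF T sub]) simp
  also have "\<dots> = (\<Sum>i\<in>I. a i * (\<Sum>x\<in>T. c i x * bd_basis G k x y))"
    by (simp add: sum_distrib_left sum_distrib_right mult.assoc sum.swap[of _ T])
  also have "\<dots> = (\<Sum>i\<in>I. a i * bd G k (c i) y)"
    by (rule sum.cong[OF refl], subst bd_superset[OF T]) (auto simp: T_def)
  finally show "bd G k (\<lambda>y. \<Sum>i\<in>I. a i * c i y) y = (\<Sum>i\<in>I. a i * bd G k (c i) y)" .
qed

lemma finite_ind: "finite {y. ind x y \<noteq> 0}"
  by (rule finite_subset[of _ "{x}"]) (auto simp: ind_def)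

lemma bd_ind: "bd G k (ind x) = bd_basis G k x"
proof
  fix y show "bd G k (ind x) y = bd_basis G k x y"
    by (subst bd_superset[of "{x}"]) (auto simp: ind_def)
qed

lemma pair_ind: "pair g (ind x) = g x"
  by (subst pair_superset[of "{x}"]) (auto simp: ind_def)

lemma dd_cancel:
  fixes F :: "nat \<Rightarrow> nat \<Rightarrow> 'c::comm_ring_1"
  assumes m: "m \<ge> 1" and FF: "\<And>i j. j < i \<Longrightarrow> i \<le> m \<Longrightarrow> F j i = F (i - 1) j"
  shows "(\<Sum>i\<in>{0..m}. \<Sum>j\<in>{0..m-1}. (-1) ^ (i + j) * F j i) = 0"
proof -
  define t where "t p = (-1) ^ (fst p + snd p) * F (snd p) (fst p)" for p
  define P1 where "P1 = {p \<in> {0..m} \<times> {0..m-1}. snd p < fst p}"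
  define P2 where "P2 = {p \<in> {0..m} \<times> {0..m-1}. fst p \<le> snd p}"
  have PP: "{0..m} \<times> {0..m-1} = P1 \<union> P2" "P1 \<inter> P2 = {}" unfolding P1_def P2_def by auto
  have fin: "finite P1" "finite P2" unfolding P1_def P2_def by (auto intro: finite_subset[of _ "{0..m} \<times> {0..m-1}"])
  define h where "h p = (snd p + 1, fst p)" for p :: "nat \<times> nat"
  have bij: "bij_betw h P2 P1"
  proof (rule bij_betw_byWitness[where f' = "\<lambda>p. (snd p, fst p - 1)"])
    show "\<forall>a\<in>P2. (snd (h a), fst (h a) - 1) = a" unfolding h_def by auto
    show "\<forall>a\<in>P1. h (snd a, fst a - 1) = a" unfolding h_def P1_def by auto
    show "h ` P2 \<subseteq> P1" unfolding h_def P1_def P2_def using m by auto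
    show "(\<lambda>p. (snd p, fst p - 1)) ` P1 \<subseteq> P2" unfolding P1_def P2_def by auto
  qed
  have th: "t (h p) = - t p" if "p \<in> P2" for p
  proof -
    obtain i j where p: "p = (i, j)" by force
    have ij: "i \<le> j" "j \<le> m - 1" using that p unfolding P2_def by auto
    have "F i (j + 1) = F j i" using FF[of i "j+1"] ij m by auto
    thus ?thesis unfolding t_def h_def p by (simp add: add.commute)
  qed
  have "sum t P1 = sum (t \<circ> h) P2" using sum.reindex_bij_betw[OF bij, of t] by simp
  also have "\<dots> = - sum t P2" using th by (simp add: sum_negf[symmetric])
  finally have e: "sum t P1 + sum t P2 = 0" by simp
  have "(\<Sum>i\<in>{0..m}. \<Sum>j\<in>{0..m-1}. (-1) ^ (i + j) * F j i) = sum t ({0..m} \<times> {0..m-1})"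
    unfolding t_def by (simp add: sum.cartesian_product case_prod_beta)
  also have "\<dots> = sum t P1 + sum t P2" unfolding PP by (rule sum.union_disjoint[OF fin PP(2)])
  finally show ?thesis using e by simp
qed

lemma bd_zero_deg: "bd G 0 c = (\<lambda>_. 0)"
  by (auto simp: bd_def bd_basis_def)

lemma bd_bd_basis:
  assumes G: "group G" and gs: "gs \<in> tuples G m"
  shows "bd G (m - 1) (bd_basis G m gs) = (\<lambda>_. 0)"
proof (cases "m \<ge> 2")
  case False
  hence "m - 1 = 0" by auto
  thus ?thesis by (simp add: bd_zero_deg)
next
  case True
  have m1: "m \<ge> 1" "m - 1 \<ge> 1" using True by auto
  show ?thesis
  proof
    fix y
    have "bd G (m - 1) (bd_basis G m gs) y = (\<Sum>i\<in>{0..m}. (-1) ^ i * bd G (m - 1) (ind (face G m i gs)) y)"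
      unfolding bd_basis_face[OF m1(1)] by (subst bd_lin) (auto simp: finite_ind)
    also have "\<dots> = (\<Sum>i\<in>{0..m}. (-1) ^ i * (\<Sum>j\<in>{0..m-1}. (-1) ^ j * ind (face G (m-1) j (face G m i gs)) y))"
      unfolding bd_ind bd_basis_face[OF m1(2)] by simp
    also have "\<dots> = (\<Sum>i\<in>{0..m}. \<Sum>j\<in>{0..m-1}. (-1) ^ (i + j) * ind (face G (m-1) j (face G m i gs)) y)"
      by (simp add: sum_distrib_left power_add mult.assoc)
    also have "\<dots> = 0"
      by (rule dd_cancel[OF m1(1)]) (use face_face[OF G gs True] in auto)
    finally show "bd G (m - 1) (bd_basis G m gs) y = 0" .
  qed
qed



section \<open>Absolute value facts\<close>

lemma nonarchD:
  assumes "nonarch_abs v"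
  shows na_nonneg: "v x \<ge> 0" and na_zero: "v 0 = 0" and na_mult: "v (x * y) = v x * v y"
    and na_add: "v (x + y) \<le> max (v x) (v y)"
  using assms unfolding nonarch_abs_def by auto

lemma na_one: assumes "nonarch_abs v" shows "v 1 = 1"
proof -
  have "v 1 = v 1 * v 1" using na_mult[OF assms, of 1 1] by simp
  moreover have "v 1 \<noteq> 0" using assms unfolding nonarch_abs_def by auto
  ultimately show ?thesis by simp
qed

lemma na_minus_one: assumes "nonarch_abs v" shows "v (-1) = 1"
proof -
  have "v (-1) * v (-1) = 1" using na_mult[OF assms, of "-1" "-1"] na_one[OF assms] by simp
  moreover have "v (-1) \<ge> 0" by (rule na_nonneg[OF assms])
  ultimately have "(v (-1) - 1) * (v (-1) + 1) = 0" by (simp add: algebra_simps)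
  moreover have "v (-1) + 1 \<noteq> 0" using \<open>v (-1) \<ge> 0\<close> by simp
  ultimately show ?thesis by simp
qed

lemma na_uminus: assumes "nonarch_abs v" shows "v (- x) = v x"
  using na_mult[OF assms, of "-1" x] na_minus_one[OF assms] by simp

lemma na_diff: assumes "nonarch_abs v" shows "v (x - y) \<le> max (v x) (v y)"
  using na_add[OF assms, of x "- y"] na_uminus[OF assms, of y] by simp

lemma na_of_nat: assumes "nonarch_abs v" shows "v (of_nat n) \<le> 1"
proof (induction n)
  case 0 thus ?case using na_zero[OF assms] by simp
next
  case (Suc n)
  have "v (of_nat (Suc n)) = v (1 + of_nat n)" by simp
  also have "\<dots> \<le> max (v 1) (v (of_nat n))" by (rule na_add[OF assms])
  finally show ?case using Suc na_one[OF assms] by simp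
qed

lemma na_of_int: assumes "nonarch_abs v" shows "v (of_int m) \<le> 1"
proof (cases m rule: int_cases)
  case (nonneg n)
  thus ?thesis using na_of_nat[OF assms, of n] by simp
next
  case (neg n)
  hence "of_int m = - (of_nat (Suc n) :: 'a)" by simp
  thus ?thesis using na_of_nat[OF assms, of "Suc n"] na_uminus[OF assms, of "of_nat (Suc n)"] by simp
qed

lemma na_of_int_mult: assumes "nonarch_abs v" shows "v (of_int m * x) \<le> v x"
proof -
  have "v (of_int m * x) = v (of_int m) * v x" by (rule na_mult[OF assms])
  also have "\<dots> \<le> 1 * v x" by (rule mult_right_mono[OF na_of_int[OF assms] na_nonneg[OF assms]])
  finally show ?thesis by simp
qed

lemma na_sum:
  assumes "nonarch_abs v" "\<And>i. i \<in> I \<Longrightarrow> v (f i) \<le> B" "B \<ge> 0"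
  shows "v (\<Sum>i\<in>I. f i) \<le> B"
  using assms(2)
proof (induction I rule: infinite_finite_induct)
  case (infinite A) thus ?case using na_zero[OF assms(1)] assms(3) by simp
next
  case empty thus ?case using na_zero[OF assms(1)] assms(3) by simp
next
  case (insert x F)
  have "v (\<Sum>i\<in>insert x F. f i) = v (f x + (\<Sum>i\<in>F. f i))" using insert by simp
  also have "\<dots> \<le> max (v (f x)) (v (\<Sum>i\<in>F. f i))" by (rule na_add[OF assms(1)])
  moreover have "max (v (f x)) (v (\<Sum>i\<in>F. f i)) \<le> B" using insert by auto
  ultimately show ?case by linarith
qed

lemma chains_add: "c \<in> chains G k \<Longrightarrow> c' \<in> chains G k \<Longrightarrow> (\<lambda>y. c y + c' y) \<in> chains G k"
proof -
  assume a: "c \<in> chains G k" "c' \<in> chains G k"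
  have sub: "{x. c x + c' x \<noteq> 0} \<subseteq> {x. c x \<noteq> 0} \<union> {x. c' x \<noteq> 0}" by auto
  have "finite {x. c x + c' x \<noteq> 0}" by (rule finite_subset[OF sub]) (use a in \<open>auto simp: chains_def\<close>)
  moreover have "\<forall>x. c x + c' x \<noteq> 0 \<longrightarrow> x \<in> tuples G k" using a sub unfolding chains_def by blast
  ultimately show ?thesis unfolding chains_def by blast
qed

lemma chains_sc: "c \<in> chains G k \<Longrightarrow> (\<lambda>y. a * c y) \<in> chains G k"
  unfolding chains_def by (auto intro: finite_subset[of _ "{x. c x \<noteq> 0}"])

lemma chains_diff: "c \<in> chains G k \<Longrightarrow> c' \<in> chains G k \<Longrightarrow> (\<lambda>y. c y - c' y) \<in> chains G k"
  using chains_add[of c G k "\<lambda>y. (-1) * c' y"] chains_sc[of c' G k "-1"] by simp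

lemma chains_zero: "(\<lambda>_. 0) \<in> chains G k" unfolding chains_def by simp

lemma chains_ind: "x \<in> tuples G k \<Longrightarrow> ind x \<in> chains G k"
  unfolding chains_def using finite_ind by (auto simp: ind_def)

lemma chains_fin: "c \<in> chains G k \<Longrightarrow> finite {x. c x \<noteq> 0}" unfolding chains_def by auto

lemma bd_chain:
  assumes G: "group G" and c: "c \<in> chains G k"
  shows "bd G k c \<in> chains G (k - 1)"
proof -
  have sub: "{y. bd G k c y \<noteq> 0} \<subseteq> (\<Union>x\<in>{x. c x \<noteq> 0}. {y. bd_basis G k x y \<noteq> 0})"
    unfolding bd_def by (auto elim!: sum.not_neutral_contains_not_neutral)
  have "finite {y. bd G k c y \<noteq> 0}"
    by (rule finite_subset[OF sub]) (use chains_fin[OF c] finite_bd_basis_supp in auto)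
  moreover have "y \<in> tuples G (k - 1)" if yy: "bd G k c y \<noteq> 0" for y
  proof -
    obtain x where "c x \<noteq> 0" "bd_basis G k x y \<noteq> 0" using sub yy by blast
    thus ?thesis using bd_basis_tuples[OF G] c unfolding chains_def by blast
  qed
  ultimately show ?thesis unfolding chains_def by blast
qed

lemma bd_add:
  assumes "finite {x. c x \<noteq> 0}" "finite {x. c' x \<noteq> 0}"
  shows "bd G k (\<lambda>y. c y + c' y) = (\<lambda>x. bd G k c x + bd G k c' x)"
proof -
  have "bd G k (\<lambda>y. \<Sum>i\<in>{True, False}. 1 * (if i then c else c') y) =
        (\<lambda>x. \<Sum>i\<in>{True, False}. 1 * bd G k (if i then c else c') x)"
    by (rule bd_lin) (use assms in auto)
  thus ?thesis by simp
qed

lemma bd_sc: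
  assumes "finite {x. c x \<noteq> 0}"
  shows "bd G k (\<lambda>y. a * c y) = (\<lambda>x. a * bd G k c x)"
  using bd_lin[of "{()}" "\<lambda>_. c" G k "\<lambda>_. a"] assms by simp

lemma bd_diff:
  assumes "finite {x. c x \<noteq> 0}" "finite {x. c' x \<noteq> 0}"
  shows "bd G k (\<lambda>y. c y - c' y) = (\<lambda>x. bd G k c x - bd G k c' x)"
proof -
  have "bd G k (\<lambda>y. \<Sum>i\<in>{True, False}. (if i then 1 else -1) * (if i then c else c') y) =
        (\<lambda>x. \<Sum>i\<in>{True, False}. (if i then 1 else -1) * bd G k (if i then c else c') x)"
    by (rule bd_lin) (use assms in auto)
  thus ?thesis by simp
qed

lemma pair_add:
  assumes "finite {x. c x \<noteq> 0}" "finite {x. c' x \<noteq> 0}"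
  shows "pair g (\<lambda>y. c y + c' y) = pair g c + pair g c'"
proof -
  have "pair g (\<lambda>y. \<Sum>i\<in>{True, False}. 1 * (if i then c else c') y) =
        (\<Sum>i\<in>{True, False}. of_int 1 * pair g (if i then c else c'))"
    by (rule pair_lin) (use assms in auto)
  thus ?thesis by simp
qed

lemma pair_diff:
  assumes "finite {x. c x \<noteq> 0}" "finite {x. c' x \<noteq> 0}"
  shows "pair g (\<lambda>y. c y - c' y) = pair g c - pair g c'"
proof -
  have "pair g (\<lambda>y. \<Sum>i\<in>{True, False}. (if i then 1 else -1) * (if i then c else c') y) =
        (\<Sum>i\<in>{True, False}. of_int (if i then 1 else -1) * pair g (if i then c else c'))"
    by (rule pair_lin) (use assms in auto)
  thus ?thesis by simp
qed

lemma pair_zero: "pair g (\<lambda>_. 0) = 0" unfolding pair_def by simp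

lemma pair_bd_basis:
  assumes "x \<in> tuples G (k + 1)"
  shows "pair g (bd_basis G (k + 1) x) = cobound G k g x"
proof -
  have "pair g (bd_basis G (k + 1) x) = (\<Sum>i\<in>{0..k+1}. of_int ((-1) ^ i) * pair g (ind (face G (k+1) i x)))"
    by (subst bd_basis_face) (simp, subst pair_lin, auto simp: finite_ind)
  also have "\<dots> = cobound G k g x" unfolding cobound_face[OF assms] pair_ind by simp
  finally show ?thesis .
qed

section \<open>A linear section of the boundary map\<close>

lemma bd_section:
  assumes G: "group G"
  shows "\<exists>s. (\<forall>b\<in>bd G k ` chains G k. s b \<in> chains G k \<and> bd G k (s b) = b) \<and>
     (\<forall>b\<in>bd G k ` chains G k. \<forall>b'\<in>bd G k ` chains G k. s (\<lambda>x. b x + b' x) = (\<lambda>y. s b y + s b' y)) \<and>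
     (\<forall>b\<in>bd G k ` chains G k. \<forall>a. s (\<lambda>x. a * b x) = (\<lambda>y. a * s b y))"
proof (rule section_exists)
  show "(\<lambda>_. 0) \<in> chains G k" by (rule chains_zero)
  show "\<And>c c'. c \<in> chains G k \<Longrightarrow> c' \<in> chains G k \<Longrightarrow> (\<lambda>y. c y + c' y) \<in> chains G k" by (rule chains_add)
  show "\<And>c a. c \<in> chains G k \<Longrightarrow> (\<lambda>y. a * c y) \<in> chains G k" by (rule chains_sc)
  show "\<And>c c'. c \<in> chains G k \<Longrightarrow> c' \<in> chains G k \<Longrightarrow> bd G k (\<lambda>y. c y + c' y) = (\<lambda>x. bd G k c x + bd G k c' x)"
    by (rule bd_add) (auto simp: chains_fin)
  show "\<And>c a. c \<in> chains G k \<Longrightarrow> bd G k (\<lambda>y. a * c y) = (\<lambda>x. a * bd G k c x)"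
    by (rule bd_sc) (auto simp: chains_fin)
  show "\<And>c. c \<in> chains G k \<Longrightarrow> finite {x. bd G k c x \<noteq> 0}"
    using bd_chain[OF G] chains_fin by blast
qed

lemma section_lin:
  assumes sadd: "\<forall>b\<in>B. \<forall>b'\<in>B. s (\<lambda>x. b x + b' x) = (\<lambda>y. s b y + s b' y)"
    and ssc: "\<forall>b\<in>B. \<forall>a. s (\<lambda>x. a * b x) = (\<lambda>y. a * s b y)"
    and Badd: "\<And>b b'. b \<in> B \<Longrightarrow> b' \<in> B \<Longrightarrow> (\<lambda>x. b x + b' x) \<in> B"
    and Bsc: "\<And>b a. b \<in> B \<Longrightarrow> (\<lambda>x. a * b x) \<in> B"
    and B0: "(\<lambda>_. 0) \<in> B"
    and fin: "finite I" and bI: "\<And>i. i \<in> I \<Longrightarrow> b i \<in> B"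
  shows "(\<lambda>x. \<Sum>i\<in>I. (a i :: int) * b i x) \<in> B \<and>
         s (\<lambda>x. \<Sum>i\<in>I. a i * b i x) = (\<lambda>y. \<Sum>i\<in>I. a i * s (b i) y)"
  using fin bI
proof (induction I rule: finite_induct)
  case empty
  show ?case using B0 spec[OF bspec[OF ssc B0], of 0] by simp
next
  case (insert j F)
  have IH: "(\<lambda>x. \<Sum>i\<in>F. a i * b i x) \<in> B" "s (\<lambda>x. \<Sum>i\<in>F. a i * b i x) = (\<lambda>y. \<Sum>i\<in>F. a i * s (b i) y)"
    using insert by auto
  have bj: "b j \<in> B" using insert by auto
  have e: "(\<lambda>x. \<Sum>i\<in>insert j F. a i * b i x) = (\<lambda>x. (\<lambda>x. a j * b j x) x + (\<lambda>x. \<Sum>i\<in>F. a i * b i x) x)"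
    using insert by simp
  have "s (\<lambda>x. \<Sum>i\<in>insert j F. a i * b i x) = (\<lambda>y. s (\<lambda>x. a j * b j x) y + s (\<lambda>x. \<Sum>i\<in>F. a i * b i x) y)"
    unfolding e by (rule bspec[OF bspec[OF sadd Bsc[OF bj]] IH(1)])
  also have "\<dots> = (\<lambda>y. \<Sum>i\<in>insert j F. a i * s (b i) y)"
    unfolding IH(2) using ssc bj insert by simp
  finally show ?case unfolding e using Badd[OF Bsc[OF bj] IH(1)] by simp
qed

section \<open>Finite generation bounds the values on cycles\<close>

lemma fg_bound:
  fixes G :: "('a, 'b) monoid_scheme" and g :: "'a list \<Rightarrow> 'k::field"
  assumes na: "nonarch_abs v" and G: "group G" and fg: "homology_fg G k"
    and g: "g \<in> cochains G k" and C: "\<And>x. v (cobound G k g x) \<le> C"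
  shows "\<exists>M. \<forall>z\<in>hcycles G k. v (pair g z) \<le> M"
proof -
  from fg have "\<exists>S. finite S \<and> S \<subseteq> hcycles G k \<and> (\<forall>z\<in>hcycles G k. \<exists>a :: ('a list \<Rightarrow> int) \<Rightarrow> int.
        (\<lambda>y. z y - (\<Sum>s\<in>S. a s * s y)) \<in> hboundaries G k)" unfolding homology_fg_def .
  then obtain S where S: "finite S" "S \<subseteq> hcycles G k"
    and gen: "\<forall>z\<in>hcycles G k. \<exists>a :: ('a list \<Rightarrow> int) \<Rightarrow> int.
        (\<lambda>y. z y - (\<Sum>s\<in>S. a s * s y)) \<in> hboundaries G k"
    by (elim exE conjE)
  define M where "M = max C 0 + (\<Sum>s\<in>S. v (pair g s))"
  have Sfin: "\<And>s. s \<in> S \<Longrightarrow> finite {x. s x \<noteq> 0}" using S unfolding hcycles_def chains_def by auto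
  have nn: "\<And>s. 0 \<le> v (pair g s)" using na_nonneg[OF na] by blast
  have M0: "max C 0 \<le> M" unfolding M_def using nn by (simp add: sum_nonneg)
  have MS: "v (pair g s) \<le> M" if "s \<in> S" for s
  proof -
    have "v (pair g s) \<le> (\<Sum>s\<in>S. v (pair g s))" by (rule member_le_sum) (use that S nn in auto)
    thus ?thesis unfolding M_def by simp
  qed
  have Mnn: "0 \<le> M" using M0 by simp
  show ?thesis
  proof (intro exI ballI)
    fix z assume z: "z \<in> hcycles G k"
    from bspec[OF gen z] obtain a :: "('a list \<Rightarrow> int) \<Rightarrow> int"
      where a: "(\<lambda>y. z y - (\<Sum>s\<in>S. a s * s y)) \<in> hboundaries G k" by (elim exE)
    then obtain c where c0: "(\<lambda>y. z y - (\<Sum>s\<in>S. a s * s y)) = bd G (k + 1) c" "c \<in> chains G (k + 1)"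
      unfolding hboundaries_def by (rule imageE)
    have c: "c \<in> chains G (k + 1)" "bd G (k + 1) c = (\<lambda>y. z y - (\<Sum>s\<in>S. a s * s y))"
      using c0 by simp_all
    define u where "u = (\<lambda>y. \<Sum>s\<in>S. a s * s y)"
    have zsplit: "z = (\<lambda>y. u y + bd G (k + 1) c y)" unfolding c(2) u_def by simp
    have ufin: "finite {x. u x \<noteq> 0}"
      by (rule finite_subset[of _ "\<Union>s\<in>S. {x. s x \<noteq> 0}"])
         (use S(1) Sfin in \<open>auto simp: u_def elim!: sum.not_neutral_contains_not_neutral\<close>)
    have wfin: "finite {x. bd G (k + 1) c x \<noteq> 0}" using bd_chain[OF G c(1)] chains_fin by blast
    have pz: "pair g z = pair g u + pair g (bd G (k + 1) c)"
      unfolding zsplit by (rule pair_add[OF ufin wfin])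
    have pu: "pair g u = (\<Sum>s\<in>S. of_int (a s) * pair g s)"
      unfolding u_def by (rule pair_lin[OF S(1) Sfin])
    have tb: "v (of_int (a s) * pair g s) \<le> M" if "s \<in> S" for s
      by (rule order_trans[OF na_of_int_mult[OF na] MS[OF that]])
    have "v (pair g u) \<le> M" unfolding pu
      by (rule na_sum[OF na tb Mnn])
    moreover have "v (pair g (bd G (k + 1) c)) \<le> M"
    proof -
      have "pair g (bd G (k + 1) c) = (\<Sum>x\<in>{x. c x \<noteq> 0}. of_int (c x) * pair g (bd_basis G (k + 1) x))"
        unfolding bd_def by (rule pair_lin[OF chains_fin[OF c(1)] finite_bd_basis_supp])
      also have "\<dots> = (\<Sum>x\<in>{x. c x \<noteq> 0}. of_int (c x) * cobound G k g x)"
      proof (rule sum.cong[OF refl])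
        fix x assume "x \<in> {x. c x \<noteq> 0}"
        hence "x \<in> tuples G (k + 1)" using c(1) unfolding chains_def by blast
        thus "of_int (c x) * pair g (bd_basis G (k + 1) x) = of_int (c x) * cobound G k g x"
          using pair_bd_basis[of x G k g] by simp
      qed
      finally have e: "pair g (bd G (k + 1) c) = (\<Sum>x\<in>{x. c x \<noteq> 0}. of_int (c x) * cobound G k g x)" .
      have "v (\<Sum>x\<in>{x. c x \<noteq> 0}. of_int (c x) * cobound G k g x) \<le> max C 0"
      proof (rule na_sum[OF na])
        fix x show "v (of_int (c x) * cobound G k g x) \<le> max C 0"
          using order_trans[OF na_of_int_mult[OF na] C, of "c x" x] by linarith
      qed simp
      thus ?thesis unfolding e using M0 by linarith
    qed
    ultimately show "v (pair g z) \<le> M" unfolding pz using na_add[OF na, of "pair g u" "pair g (bd G (k + 1) c)"]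
      by linarith
  qed
qed

section \<open>Bounded primitives\<close>

lemma key_bounded_primitive:
  fixes G :: "('a, 'b) monoid_scheme" and g :: "'a list \<Rightarrow> 'k::field"
  assumes na: "nonarch_abs v" and G: "group G" and fg: "homology_fg G k"
    and g: "g \<in> cochains G k" and C: "\<And>x. v (cobound G k g x) \<le> C"
  shows "\<exists>h\<in>bcochains G v k. cobound G k h = cobound G k g"
proof -
  let ?B = "bd G k ` chains G k"
  obtain s where s1: "\<forall>b\<in>?B. s b \<in> chains G k \<and> bd G k (s b) = b"
    and s2: "\<forall>b\<in>?B. \<forall>b'\<in>?B. s (\<lambda>x. b x + b' x) = (\<lambda>y. s b y + s b' y)"
    and s3: "\<forall>b\<in>?B. \<forall>a. s (\<lambda>x. a * b x) = (\<lambda>y. a * s b y)"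
    using bd_section[OF G, of k] by (elim exE conjE)
  obtain M where M: "\<forall>z\<in>hcycles G k. v (pair g z) \<le> M" using fg_bound[OF na G fg g C] by (elim exE)
  have Badd: "(\<lambda>x. b x + b' x) \<in> ?B" if bb: "b \<in> ?B" "b' \<in> ?B" for b b'
  proof -
    obtain c where c1: "b = bd G k c" "c \<in> chains G k" using bb(1) by (elim imageE)
    obtain c' where c2: "b' = bd G k c'" "c' \<in> chains G k" using bb(2) by (elim imageE)
    note cc = c1 c2
    have "(\<lambda>x. b x + b' x) = bd G k (\<lambda>y. c y + c' y)" unfolding cc(1,3)
      by (rule bd_add[symmetric]) (use cc chains_fin in auto)
    thus ?thesis using chains_add[OF cc(2,4)] by (rule image_eqI)
  qed
  have Bsc: "(\<lambda>x. a * b x) \<in> ?B" if bb: "b \<in> ?B" for b a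
  proof -
    obtain c where cc: "b = bd G k c" "c \<in> chains G k" using bb by (elim imageE)
    have "(\<lambda>x. a * b x) = bd G k (\<lambda>y. a * c y)" unfolding cc(1)
      by (rule bd_sc[symmetric]) (use cc chains_fin in auto)
    thus ?thesis using chains_sc[OF cc(2)] by (rule image_eqI)
  qed
  have bd0: "bd G k (\<lambda>_. 0) = (\<lambda>_. 0)" unfolding bd_def by simp
  have B0: "(\<lambda>_. 0) \<in> ?B" using chains_zero[of G k] bd0 by (metis image_eqI)
  have s0: "s (\<lambda>_. 0) = (\<lambda>_. 0)" using spec[OF bspec[OF s3 B0], of 0] by simp
  have indB: "bd G k (ind \<sigma>) \<in> ?B" if "\<sigma> \<in> tuples G k" for \<sigma>
    using chains_ind[OF that] by (rule imageI)
  define z where "z \<sigma> = (\<lambda>y. ind \<sigma> y - s (bd G k (ind \<sigma>)) y)" for \<sigma>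
  define h where "h \<sigma> = (if \<sigma> \<in> tuples G k then pair g (z \<sigma>) else 0)" for \<sigma>
  have zc: "z \<sigma> \<in> hcycles G k" if st: "\<sigma> \<in> tuples G k" for \<sigma>
  proof -
    have sc: "s (bd G k (ind \<sigma>)) \<in> chains G k" "bd G k (s (bd G k (ind \<sigma>))) = bd G k (ind \<sigma>)"
      using s1 indB[OF st] by auto
    have "z \<sigma> \<in> chains G k" unfolding z_def by (rule chains_diff[OF chains_ind[OF st] sc(1)])
    moreover have "bd G k (z \<sigma>) = (\<lambda>_. 0)" unfolding z_def
      by (subst bd_diff) (use finite_ind chains_fin[OF sc(1)] sc(2) in auto)
    ultimately show ?thesis unfolding hcycles_def by blast
  qed
  have hb: "h \<in> bcochains G v k"
  proof -
    have "h \<in> cochains G k" unfolding cochains_def h_def by simp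
    moreover have "\<forall>x. v (h x) \<le> max M 0"
    proof
      fix x show "v (h x) \<le> max M 0"
        using M zc na_zero[OF na] unfolding h_def by (cases "x \<in> tuples G k") force+
    qed
    ultimately show ?thesis unfolding bcochains_def by blast
  qed
  have "cobound G k h = cobound G k g"
  proof
    fix \<tau>
    show "cobound G k h \<tau> = cobound G k g \<tau>"
    proof (cases "\<tau> \<in> tuples G (k + 1)")
      case False
      thus ?thesis by (simp add: cobound_def)
    next
      case True
      define x where "x i = face G (k + 1) i \<tau>" for i
      have xt: "x i \<in> tuples G k" if "i \<in> {0..k+1}" for i
        using face_tuples[OF G True, of i] that unfolding x_def by simp
      have bB: "bd_basis G k (x i) \<in> ?B" if "i \<in> {0..k+1}" for i
        using indB[OF xt[OF that]] by (simp add: bd_ind)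
      have sxc: "s (bd_basis G k (x i)) \<in> chains G k" if "i \<in> {0..k+1}" for i
        using s1 bB[OF that] by blast
      have hx: "h (x i) = g (x i) - pair g (s (bd_basis G k (x i)))" if "i \<in> {0..k+1}" for i
      proof -
        have "h (x i) = pair g (z (x i))" unfolding h_def using xt[OF that] by simp
        also have "\<dots> = pair g (ind (x i)) - pair g (s (bd G k (ind (x i))))" unfolding z_def
          by (rule pair_diff) (use finite_ind chains_fin sxc[OF that] in \<open>auto simp: bd_ind\<close>)
        finally show ?thesis by (simp add: pair_ind bd_ind)
      qed
      have zero: "(\<Sum>i\<in>{0..k+1}. (-1) ^ i * pair g (s (bd_basis G k (x i)))) = 0"
      proof -
        have sl: "s (\<lambda>y. \<Sum>i\<in>{0..k+1}. (-1) ^ i * bd_basis G k (x i) y) =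
                  (\<lambda>y. \<Sum>i\<in>{0..k+1}. (-1) ^ i * s (bd_basis G k (x i)) y)"
          by (rule conjunct2[OF section_lin[OF s2 s3 Badd Bsc B0 finite_atLeastAtMost bB]])
        have "(\<lambda>y. \<Sum>i\<in>{0..k+1}. (-1) ^ i * bd_basis G k (x i) y) = bd G k (bd_basis G (k + 1) \<tau>)"
        proof -
          have "bd G k (bd_basis G (k + 1) \<tau>) = bd G k (\<lambda>y. \<Sum>i\<in>{0..k+1}. (-1) ^ i * ind (x i) y)"
            unfolding x_def by (subst bd_basis_face) simp_all
          also have "\<dots> = (\<lambda>y. \<Sum>i\<in>{0..k+1}. (-1) ^ i * bd G k (ind (x i)) y)"
            by (rule bd_lin) (auto simp: finite_ind)
          finally show ?thesis by (simp add: bd_ind)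
        qed
        also have "\<dots> = (\<lambda>_. 0)" using bd_bd_basis[OF G True] by simp
        finally have E: "(\<lambda>y. \<Sum>i\<in>{0..k+1}. (-1) ^ i * bd_basis G k (x i) y) = (\<lambda>_. 0)" .
        have "(\<lambda>y. \<Sum>i\<in>{0..k+1}. (-1) ^ i * s (bd_basis G k (x i)) y) =
              s (\<lambda>y. \<Sum>i\<in>{0..k+1}. (-1) ^ i * bd_basis G k (x i) y)" by (rule sl[symmetric])
        also have "\<dots> = (\<lambda>_. 0)" unfolding E by (rule s0)
        finally have "(\<lambda>y. \<Sum>i\<in>{0..k+1}. (-1) ^ i * s (bd_basis G k (x i)) y) = (\<lambda>_. 0)" .
        hence A1: "pair g (\<lambda>y. \<Sum>i\<in>{0..k+1}. (-1) ^ i * s (bd_basis G k (x i)) y) = 0"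
          using pair_zero by simp
        have A2: "pair g (\<lambda>y. \<Sum>i\<in>{0..k+1}. (-1) ^ i * s (bd_basis G k (x i)) y) =
             (\<Sum>i\<in>{0..k+1}. of_int ((-1) ^ i) * pair g (s (bd_basis G k (x i))))"
          by (rule pair_lin) (use chains_fin sxc in auto)
        have "(\<Sum>i\<in>{0..k+1}. of_int ((-1) ^ i) * pair g (s (bd_basis G k (x i)))) = 0"
          using trans[OF sym[OF A2] A1] .
        thus ?thesis by (simp only: of_int_power of_int_minus of_int_1)
      qed
      have "cobound G k h \<tau> = (\<Sum>i\<in>{0..k+1}. (-1) ^ i * h (x i))"
        unfolding x_def by (rule cobound_face[OF True])
      also have "\<dots> = (\<Sum>i\<in>{0..k+1}. (-1) ^ i * g (x i) - (-1) ^ i * pair g (s (bd_basis G k (x i))))"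
        by (rule sum.cong[OF refl]) (simp add: hx right_diff_distrib)
      also have "\<dots> = (\<Sum>i\<in>{0..k+1}. (-1) ^ i * g (x i))"
        using zero by (simp add: sum_subtractf)
      also have "\<dots> = cobound G k g \<tau>"
        unfolding x_def by (rule cobound_face[OF True, symmetric])
      finally show ?thesis .
    qed
  qed
  thus ?thesis using hb by blast
qed

lemma cobound_add: "cobound G k (\<lambda>x. a x + b x) = (\<lambda>x. cobound G k a x + cobound G k b x)"
proof
  fix gs show "cobound G k (\<lambda>x. a x + b x) gs = cobound G k a gs + cobound G k b gs"
    unfolding cobound_def by (simp add: sum.distrib distrib_left algebra_simps)
qed

lemma cobound_diff: "cobound G k (\<lambda>x. a x - b x) = (\<lambda>x. cobound G k a x - cobound G k b x)"
proof
  fix gs show "cobound G k (\<lambda>x. a x - b x) gs = cobound G k a gs - cobound G k b gs"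
    unfolding cobound_def by (simp add: sum_subtractf right_diff_distrib algebra_simps)
qed

lemma cobound_zero: "cobound G k (\<lambda>_. 0) = (\<lambda>_. 0)"
  by (auto simp: cobound_def fun_eq_iff)

lemma cochains_add: "a \<in> cochains G k \<Longrightarrow> b \<in> cochains G k \<Longrightarrow> (\<lambda>x. a x + b x) \<in> cochains G k"
  unfolding cochains_def by simp

lemma bcochains_cochains: "a \<in> bcochains G v k \<Longrightarrow> a \<in> cochains G k"
  unfolding bcochains_def by simp

lemma bcochains_zero: assumes "nonarch_abs v" shows "(\<lambda>_. 0) \<in> bcochains G v k"
  unfolding bcochains_def cochains_def using na_zero[OF assms] by auto

lemma bcochains_add:
  assumes na: "nonarch_abs v" and a: "a \<in> bcochains G v k" and b: "b \<in> bcochains G v k"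
  shows "(\<lambda>x. a x + b x) \<in> bcochains G v k" "(\<lambda>x. a x - b x) \<in> bcochains G v k"
proof -
  obtain Ca where Ca: "\<And>x. v (a x) \<le> Ca" using a unfolding bcochains_def by blast
  obtain Cb where Cb: "\<And>x. v (b x) \<le> Cb" using b unfolding bcochains_def by blast
  have "\<forall>x. v (a x + b x) \<le> max Ca Cb"
    using na_add[OF na] Ca Cb by (meson max.mono order_trans)
  moreover have "\<forall>x. v (a x - b x) \<le> max Ca Cb"
    using na_diff[OF na] Ca Cb by (meson max.mono order_trans)
  ultimately show "(\<lambda>x. a x + b x) \<in> bcochains G v k" "(\<lambda>x. a x - b x) \<in> bcochains G v k"
    using a b unfolding bcochains_def cochains_def by auto
qed

lemma bcobound_closed:
  assumes na: "nonarch_abs v" and p: "p \<in> cobound G k ` bcochains G v k" and q: "q \<in> cobound G k ` bcochains G v k"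
  shows "(\<lambda>x. p x + q x) \<in> cobound G k ` bcochains G v k" "(\<lambda>x. p x - q x) \<in> cobound G k ` bcochains G v k"
proof -
  obtain a where a: "p = cobound G k a" "a \<in> bcochains G v k" using p by (elim imageE)
  obtain b where b: "q = cobound G k b" "b \<in> bcochains G v k" using q by (elim imageE)
  show "(\<lambda>x. p x + q x) \<in> cobound G k ` bcochains G v k"
    using bcochains_add(1)[OF na a(2) b(2)] unfolding a(1) b(1) cobound_add[symmetric] by (rule imageI)
  show "(\<lambda>x. p x - q x) \<in> cobound G k ` bcochains G v k"
    using bcochains_add(2)[OF na a(2) b(2)] unfolding a(1) b(1) cobound_diff[symmetric] by (rule imageI)
qed

theorem corollary9p44:
  fixes G :: "('a, 'b) monoid_scheme" and v :: "'k::field \<Rightarrow> real" and n :: nat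
  assumes "nonarch_abs v"
    and "group G"
    and "n \<ge> 1"
    and "homology_fg G (n - 1)"
  shows "inj_on (comparison_map G n) (bounded_cohomology G v n :: ('a list \<Rightarrow> 'k) set set)"
proof (rule inj_onI)
  note na = assms(1) and G = assms(2)
  define k where "k = n - 1"
  have nk: "n = k + 1" using assms(3) unfolding k_def by simp
  have fg: "homology_fg G k" using assms(4) unfolding k_def .
  have bB: "bcoboundaries G v n = cobound G k ` bcochains G v k"
    unfolding bcoboundaries_def using assms(3) k_def by simp
  have B: "(coboundaries G n :: ('a list \<Rightarrow> 'k) set) = cobound G k ` cochains G k"
    unfolding coboundaries_def using assms(3) k_def by simp
  have zero_bB: "(\<lambda>_. 0) \<in> bcoboundaries G v n"
  proof -
    have "cobound G k (\<lambda>_. 0 :: 'k) \<in> cobound G k ` bcochains G v k" by (rule imageI[OF bcochains_zero[OF na]])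
    thus ?thesis unfolding bB cobound_zero .
  qed
  have zero_B: "(\<lambda>_. 0 :: 'k) \<in> coboundaries G n"
  proof -
    have "cobound G k (\<lambda>_. 0 :: 'k) \<in> cobound G k ` cochains G k"
      by (rule imageI[OF bcochains_cochains[OF bcochains_zero[OF na]]])
    thus ?thesis unfolding B cobound_zero .
  qed
  fix X Y :: "('a list \<Rightarrow> 'k) set"
  assume X: "X \<in> bounded_cohomology G v n" and Y: "Y \<in> bounded_cohomology G v n"
    and eq: "comparison_map G n X = comparison_map G n Y"
  obtain f1 where f1: "f1 \<in> bcocycles G v n" "X = bcoh_class G v n f1"
    using X unfolding bounded_cohomology_def by blast
  obtain f2 where f2: "f2 \<in> bcocycles G v n" "Y = bcoh_class G v n f2"
    using Y unfolding bounded_cohomology_def by blast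
  have f1X: "f1 \<in> X" unfolding f1(2) bcoh_class_def using f1(1) zero_bB by simp
  have f1coc: "f1 \<in> cocycles G n" using f1(1) unfolding bcocycles_def cocycles_def bcochains_def by simp
  have "f1 \<in> coh_class G n f1" unfolding coh_class_def using f1coc zero_B by simp
  hence "f1 \<in> comparison_map G n X" unfolding comparison_map_def using f1X by blast
  hence "f1 \<in> comparison_map G n Y" using eq by simp
  then obtain f where fY: "f \<in> Y" and f1f: "f1 \<in> coh_class G n f" unfolding comparison_map_def by blast
  obtain g1 where g1: "(\<lambda>x. f1 x - f x) = cobound G k g1" "g1 \<in> cochains G k"
    using f1f unfolding coh_class_def B by blast
  obtain h2 where h2: "(\<lambda>x. f x - f2 x) = cobound G k h2" "h2 \<in> bcochains G v k"
    using fY unfolding f2(2) bcoh_class_def bB by blast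
  define g where "g = (\<lambda>x. g1 x + h2 x)"
  have gc: "g \<in> cochains G k" unfolding g_def by (rule cochains_add[OF g1(2) bcochains_cochains[OF h2(2)]])
  have cg: "cobound G k g = (\<lambda>x. f1 x - f2 x)"
  proof -
    have "cobound G k g = (\<lambda>x. cobound G k g1 x + cobound G k h2 x)" unfolding g_def by (rule cobound_add)
    also have "\<dots> = (\<lambda>x. (f1 x - f x) + (f x - f2 x))" unfolding g1(1)[symmetric] h2(1)[symmetric] by simp
    finally show ?thesis by simp
  qed
  obtain C1 where C1: "\<And>x. v (f1 x) \<le> C1" using f1(1) unfolding bcocycles_def bcochains_def by blast
  obtain C2 where C2: "\<And>x. v (f2 x) \<le> C2" using f2(1) unfolding bcocycles_def bcochains_def by blast
  have Cb: "v (cobound G k g x) \<le> max C1 C2" for x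
    unfolding cg using na_diff[OF na, of "f1 x" "f2 x"] C1[of x] C2[of x] by linarith
  obtain h where h: "h \<in> bcochains G v k" "cobound G k h = cobound G k g"
    using key_bounded_primitive[OF na G fg gc Cb] by blast
  have D: "(\<lambda>x. f1 x - f2 x) \<in> bcoboundaries G v n"
    unfolding bB using h(1) by (rule image_eqI[rotated]) (simp add: h(2) cg)
  have "(\<lambda>x. f' x - f1 x) \<in> bcoboundaries G v n \<longleftrightarrow> (\<lambda>x. f' x - f2 x) \<in> bcoboundaries G v n" for f'
  proof
    assume a: "(\<lambda>x. f' x - f1 x) \<in> bcoboundaries G v n"
    have "(\<lambda>x. (f' x - f1 x) + (f1 x - f2 x)) \<in> bcoboundaries G v n"
      using bcobound_closed(1)[OF na a[unfolded bB] D[unfolded bB]] unfolding bB by simp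
    thus "(\<lambda>x. f' x - f2 x) \<in> bcoboundaries G v n" by simp
  next
    assume a: "(\<lambda>x. f' x - f2 x) \<in> bcoboundaries G v n"
    have "(\<lambda>x. (f' x - f2 x) - (f1 x - f2 x)) \<in> bcoboundaries G v n"
      using bcobound_closed(2)[OF na a[unfolded bB] D[unfolded bB]] unfolding bB by simp
    thus "(\<lambda>x. f' x - f1 x) \<in> bcoboundaries G v n" by simp
  qed
  thus "X = Y" unfolding f1(2) f2(2) bcoh_class_def by blast
qed

end
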